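(* For all integers $q\ge3$ and $n\ge3$ there exists a pyramid $PY_q^n$ in at least one of the spaces of constant curvature $\mathbb{S}^3$, $\mathbb{R}^3$, $\mathbb{H}^3$ (not necessarily in all of these spaces, and not necessarily of all sizes).
   Context: A generalized pyramid is a polyhedron with a distinguished $q$-gonal face, called the base, and $q$ possibly infinite triangles, called sides, that are adjacent in pairs and to the base (so the apex may be ideal or hyperideal in $\mathbb{H}^3$). $PY_q^n$ denotes a generalized pyramid such that the base is a regular $q$-gon, the pyramid is invariant under the rotation of angle $2\pi/q$ about the axis through the center of and perpendicular to the base, and the dihedral angle between adjacent sides is $2\pi/n$. *)

theory Defs
  imports Complex_Main
begin

text \<open>
  Uniform projective model of the three 3-dimensional spaces of constant curvature.
  Points and covectors are vectors of R^4 with coordinates (x0,x1,x2,x3).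
  \<^item> S^3 : unit sphere  x0^2+x1^2+x2^2+x3^2 = 1
  \<^item> R^3 : affine hyperplane x0 = 1
  \<^item> H^3 : hyperboloid  -x0^2+x1^2+x2^2+x3^2 = -1, x0 > 0
  A plane is the zero set of a covector u (via the pairing u.x), a closed
  half-space is  {x. u.x \<le> 0}  with outward normal u.
  Points of the projective closure of H^3 (ideal / hyperideal points) are nonzero
  vectors of R^4 up to scaling; a vector a with -a0^2+a1^2+a2^2+a3^2 < 0 is a proper
  point, = 0 an ideal point, > 0 a hyperideal point.
\<close>

datatype v4 = V4 real real real real

datatype geom = Sph | Euc | Hyp

fun c0 :: "v4 \<Rightarrow> real" where "c0 (V4 a b c d) = a"
fun c1 :: "v4 \<Rightarrow> real" where "c1 (V4 a b c d) = b"
fun c2 :: "v4 \<Rightarrow> real" where "c2 (V4 a b c d) = c"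
fun c3 :: "v4 \<Rightarrow> real" where "c3 (V4 a b c d) = d"

definition pair :: "v4 \<Rightarrow> v4 \<Rightarrow> real" where
  "pair u x = c0 u * c0 x + c1 u * c1 x + c2 u * c2 x + c3 u * c3 x"

definition lor :: "v4 \<Rightarrow> v4 \<Rightarrow> real" where
  "lor x y = - c0 x * c0 y + c1 x * c1 y + c2 x * c2 y + c3 x * c3 y"

fun curv :: "geom \<Rightarrow> real" where
  "curv Sph = 1" | "curv Euc = 0" | "curv Hyp = -1"

definition dform :: "geom \<Rightarrow> v4 \<Rightarrow> v4 \<Rightarrow> real" where
  "dform g u w = curv g * c0 u * c0 w + c1 u * c1 w + c2 u * c2 w + c3 u * c3 w"

fun space :: "geom \<Rightarrow> v4 set" where
  "space Sph = {x. c0 x ^ 2 + c1 x ^ 2 + c2 x ^ 2 + c3 x ^ 2 = 1}"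
| "space Euc = {x. c0 x = 1}"
| "space Hyp = {x. lor x x = -1 \<and> c0 x > 0}"

definition dihedral_angle :: "geom \<Rightarrow> v4 \<Rightarrow> v4 \<Rightarrow> real" where
  "dihedral_angle g u w = arccos (- dform g u w / sqrt (dform g u u * dform g w w))"

text \<open>rotation by angle th about the axis through the point C = (1,0,0,0)
  in direction of x3 (an isometry of each of the three models, acting equally
  on points and covectors)\<close>
fun rot :: "real \<Rightarrow> v4 \<Rightarrow> v4" where
  "rot th (V4 a b c d) = V4 a (cos th * b - sin th * c) (sin th * b + cos th * c) d"

definition centre :: v4 where "centre = V4 1 0 0 0"

text \<open>base plane x3 = 0, the pyramid lying in the half-space x3 \<ge> 0\<close>
definition base_cov :: v4 where "base_cov = V4 0 0 0 (-1)"

definition side_cov :: "nat \<Rightarrow> v4 \<Rightarrow> nat \<Rightarrow> v4" where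
  "side_cov q s k = rot (2 * pi * real k / real q) s"

definition pyr_poly :: "geom \<Rightarrow> nat \<Rightarrow> v4 \<Rightarrow> v4 set" where
  "pyr_poly g q s = {x \<in> space g. pair base_cov x \<le> 0 \<and> (\<forall>k<q. pair (side_cov q s k) x \<le> 0)}"

text \<open>The side covector s defines a generalized pyramid (in standard position:
  base in the plane x3 = 0 centred at C, axis the x3-axis through C, symmetric
  under rotation by 2 pi / q) when:
  the side planes are genuine planes; the centre C of the base lies strictly inside
  every side half-space; the base is a q-gon with (proper) vertex v lying on the
  base and on the adjacent sides 0 and 1 and strictly inside all other sides;
  and all side planes pass through a common apex a lying strictly on the pyramid
  side of the base, where in S^3 and R^3 the apex is a proper point, while in H^3
  it is a point of the projective closure which, if proper or ideal, lies above
  the base (otherwise it is hyperideal).\<close>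
definition is_gen_pyramid :: "geom \<Rightarrow> nat \<Rightarrow> v4 \<Rightarrow> bool" where
  "is_gen_pyramid g q s \<longleftrightarrow>
     3 \<le> q \<and>
     dform g s s > 0 \<and>
     (\<forall>k<q. pair (side_cov q s k) centre < 0) \<and>
     (\<exists>v \<in> space g. pair base_cov v = 0 \<and> pair (side_cov q s 0) v = 0 \<and>
        pair (side_cov q s 1) v = 0 \<and> (\<forall>k. 2 \<le> k \<and> k < q \<longrightarrow> pair (side_cov q s k) v < 0)) \<and>
     (if g = Hyp then
        (\<exists>a. a \<noteq> V4 0 0 0 0 \<and> (\<forall>k<q. pair (side_cov q s k) a = 0) \<and> c3 a \<noteq> 0 \<and>
             (lor a a \<le> 0 \<longrightarrow> c0 a * c3 a > 0))
      else
        (\<exists>a \<in> space g. (\<forall>k<q. pair (side_cov q s k) a = 0) \<and> pair base_cov a < 0))"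

definition PY_exists_in :: "geom \<Rightarrow> nat \<Rightarrow> nat \<Rightarrow> bool" where
  "PY_exists_in g q n \<longleftrightarrow>
     (\<exists>s. is_gen_pyramid g q s \<and>
          dihedral_angle g (side_cov q s 0) (side_cov q s 1) = 2 * pi / real n)"

end

theory Submission
  imports Defs
begin

lemma cos_side_lt:
  fixes q k :: nat
  assumes "3 \<le> q" "2 \<le> k" "k < q"
  shows "cos ((2 * real k - 1) * pi / real q) < cos (pi / real q)"
proof -
  define x where "x = (2 * real k - 1) * pi / real q"
  have qp: "real q > 0" using assms by simp
  have k1: "real k \<ge> 2" "real k + 1 \<le> real q" using assms by auto
  have a: "pi / real q < x" unfolding x_def using k1 qp
    by (simp add: divide_strict_right_mono pi_gt_zero)
  have b: "x < 2 * pi - pi / real q"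
  proof -
    have "(2 * real k - 1) * pi < (2 * real q - 1) * pi"
      using k1 by (intro mult_strict_right_mono) auto
    hence "(2 * real k - 1) * pi / real q < (2 * real q - 1) * pi / real q"
      using qp by (simp add: divide_strict_right_mono)
    also have "\<dots> = 2 * pi - pi / real q" using qp by (simp add: field_simps)
    finally show ?thesis unfolding x_def .
  qed
  have p0: "0 \<le> pi / real q" using qp by simp
  show ?thesis
  proof (cases "x \<le> pi")
    case True
    thus ?thesis using cos_monotone_0_pi[OF p0 a True] unfolding x_def by simp
  next
    case False
    have "cos x = cos (2 * pi - x)" by (simp add: cos_diff)
    moreover have "cos (2 * pi - x) < cos (pi / real q)"
      using b False by (intro cos_monotone_0_pi[OF p0]) auto
    ultimately show ?thesis unfolding x_def by simp
  qed
qed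

theorem mainTheorem10:
  fixes q n :: nat
  assumes "3 \<le> q" and "3 \<le> n"
  shows "\<exists>g \<in> {Sph, Euc, Hyp}. PY_exists_in g q n"
proof -
  define t where "t = 2 * pi / real q"
  define c where "c = cos (2 * pi / real n)"
  define h where "h = (cos (t / 2))^2"
  define Y where "Y = (c + cos t) / (1 + c)"
  define L where "L = 2 / (h + max Y 0)"
  define lam where "lam = sqrt L"
  define sig where "sig = sqrt (1 - L * Y)"
  define s where "s = V4 (-1) lam 0 sig"
  have qp: "real q \<ge> 3" "real n \<ge> 3" using assms by auto
  have t0: "0 < t" "t \<le> 2 * pi / 3" unfolding t_def using qp
    by (auto simp: field_simps pi_gt_zero)
  have ct2: "cos (t / 2) > 0" using t0 by (intro cos_gt_zero_pi) auto
  have ctl: "cos t < 1"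
  proof -
    have "cos t < cos 0" using t0 pi_gt_zero by (intro cos_monotone_0_pi) auto
    thus ?thesis by simp
  qed
  have nang: "0 < 2 * pi / real n" "2 * pi / real n < pi" using qp
    by (auto simp: field_simps pi_gt_zero)
  have cl: "c < 1"
  proof -
    have "c < cos 0" unfolding c_def using nang by (intro cos_monotone_0_pi) auto
    thus ?thesis by simp
  qed
  have cg: "c > -1"
  proof -
    have "cos pi < c" unfolding c_def using nang by (intro cos_monotone_0_pi) auto
    thus ?thesis by simp
  qed
  have hdef: "h = (1 + cos t) / 2"
    unfolding h_def using cos_double_cos[of "t/2"] by simp
  have hpos: "h > 0" unfolding h_def using ct2 by simp
  have hY: "h - Y = (1 - c) * (1 - cos t) / (2 * (1 + c))"
    unfolding hdef Y_def using cg by (simp add: field_simps)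
  have hYp: "h > Y"
  proof -
    have "(1 - c) * (1 - cos t) / (2 * (1 + c)) > 0" using cl cg ctl by simp
    thus ?thesis using hY by simp
  qed
  have Lpos: "L > 0" unfolding L_def using hpos by simp
  have Lh: "L * h > 1"
  proof -
    have "h + max Y 0 < 2 * h" using hpos hYp by simp
    thus ?thesis unfolding L_def using hpos by (simp add: field_simps)
  qed
  have LY: "L * Y < 1"
  proof (cases "Y \<le> 0")
    case True thus ?thesis using Lpos by (smt (verit) mult_nonneg_nonpos)
  next
    case False
    hence "2 * Y < h + max Y 0" using hYp by simp
    thus ?thesis unfolding L_def using hpos False by (simp add: field_simps)
  qed
  have lam2: "lam * lam = L" unfolding lam_def using Lpos by simp
  have lampos: "lam > 0" unfolding lam_def using Lpos by simp
  have sig2: "sig * sig = 1 - L * Y" unfolding sig_def using LY by simp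
  have sigpos: "sig > 0" unfolding sig_def using LY by simp
  have Y1: "1 - Y = (1 - cos t) / (1 + c)" unfolding Y_def using cg by (simp add: field_simps)
  have Y1p: "1 - Y > 0" using Y1 cg ctl by simp
  define r where "r = 1 / sqrt (L * h - 1)"
  have rpos: "r > 0" unfolding r_def using Lh by simp
  have r2: "r * r * (L * h - 1) = 1" unfolding r_def using Lh
    by (simp add: field_simps)
  define v where "v = V4 (lam * r * cos (t / 2)) (r * cos (t / 2)) (r * sin (t / 2)) 0"
  have sc: "\<And>k. side_cov q s k = V4 (-1) (lam * cos (real k * t)) (lam * sin (real k * t)) sig"
    unfolding side_cov_def s_def t_def by (simp add: mult.commute)
  have sc0: "side_cov q s 0 = s" using sc[of 0] by (simp add: s_def)
  have sc1: "side_cov q s 1 = V4 (-1) (lam * cos t) (lam * sin t) sig" unfolding sc by simp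
  have pv: "\<And>k. pair (side_cov q s k) v = lam * r * (cos (real k * t - t / 2) - cos (t / 2))"
    unfolding sc v_def pair_def cos_diff by (simp add: algebra_simps)
  have pyr: "is_gen_pyramid Hyp q s"
    unfolding is_gen_pyramid_def
  proof (intro conjI)
    show "3 \<le> q" by (rule assms)
    show "dform Hyp s s > 0"
    proof -
      have "dform Hyp s s = -1 + lam * lam + sig * sig" unfolding dform_def s_def by simp
      also have "\<dots> = L * (1 - Y)" using lam2 sig2 by (simp add: algebra_simps)
      finally show ?thesis using Lpos Y1p by simp
    qed
    show "\<forall>k<q. pair (side_cov q s k) centre < 0"
      unfolding sc centre_def pair_def by simp
    show "\<exists>v \<in> space Hyp. pair base_cov v = 0 \<and> pair (side_cov q s 0) v = 0 \<and>
        pair (side_cov q s 1) v = 0 \<and> (\<forall>k. 2 \<le> k \<and> k < q \<longrightarrow> pair (side_cov q s k) v < 0)"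
    proof (intro bexI conjI allI impI)
      show "v \<in> space Hyp"
      proof -
        have "lor v v = - (r * r * ((lam * lam) * (cos (t/2))^2)) + r * r * ((sin (t/2))^2 + (cos (t/2))^2)"
          unfolding lor_def v_def c0.simps c1.simps c2.simps c3.simps power2_eq_square by algebra
        also have "\<dots> = - (r * r * ((lam * lam) * (cos (t/2))^2 - 1))"
          by (simp only: sin_cos_squared_add, simp add: algebra_simps)
        also have "\<dots> = -1" using r2 lam2 unfolding h_def by simp
        finally show ?thesis unfolding v_def using lampos rpos ct2 by simp
      qed
      show "pair base_cov v = 0" unfolding base_cov_def v_def pair_def by simp
      show "pair (side_cov q s 0) v = 0" unfolding pv by simp
      show "pair (side_cov q s 1) v = 0" unfolding pv by simp
      fix k assume k: "2 \<le> k \<and> k < q"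
      have "real k * t - t / 2 = (2 * real k - 1) * pi / real q"
        unfolding t_def using qp by (simp add: field_simps)
      moreover have "t / 2 = pi / real q" unfolding t_def by simp
      ultimately have "cos (real k * t - t / 2) < cos (t / 2)"
        using cos_side_lt[OF assms(1)] k by simp
      thus "pair (side_cov q s k) v < 0" unfolding pv using lampos rpos
        by (simp add: mult_pos_neg)
    qed
    show "if Hyp = Hyp then
        (\<exists>a. a \<noteq> V4 0 0 0 0 \<and> (\<forall>k<q. pair (side_cov q s k) a = 0) \<and> c3 a \<noteq> 0 \<and>
             (lor a a \<le> 0 \<longrightarrow> c0 a * c3 a > 0))
      else
        (\<exists>a \<in> space Hyp. (\<forall>k<q. pair (side_cov q s k) a = 0) \<and> pair base_cov a < 0)"
      using sigpos by (simp, intro exI[of _ "V4 sig 0 0 1"]) (simp add: sc pair_def)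
  qed
  have ang: "dihedral_angle Hyp (side_cov q s 0) (side_cov q s 1) = 2 * pi / real n"
  proof -
    have d01: "dform Hyp (side_cov q s 0) (side_cov q s 1) = L * (cos t - Y)"
    proof -
      have "dform Hyp (side_cov q s 0) (side_cov q s 1) = -1 + (lam * lam) * cos t + sig * sig"
        unfolding sc0 sc1 unfolding s_def dform_def by (simp add: algebra_simps)
      also have "\<dots> = L * (cos t - Y)" unfolding lam2 sig2 by (simp add: algebra_simps)
      finally show ?thesis .
    qed
    have d00: "dform Hyp (side_cov q s 0) (side_cov q s 0) = L * (1 - Y)"
    proof -
      have "dform Hyp (side_cov q s 0) (side_cov q s 0) = -1 + (lam * lam) + sig * sig"
        unfolding sc0 unfolding s_def dform_def by (simp add: algebra_simps)
      also have "\<dots> = L * (1 - Y)" unfolding lam2 sig2 by (simp add: algebra_simps)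
      finally show ?thesis .
    qed
    have d11: "dform Hyp (side_cov q s 1) (side_cov q s 1) = L * (1 - Y)"
    proof -
      have "dform Hyp (side_cov q s 1) (side_cov q s 1) = -1 + lam * lam * ((cos t)^2 + (sin t)^2) + sig * sig"
        unfolding sc1 dform_def curv.simps c0.simps c1.simps c2.simps c3.simps power2_eq_square by algebra
      also have "\<dots> = L * (1 - Y)" using lam2 sig2 by (simp add: algebra_simps)
      finally show ?thesis .
    qed
    have sq: "sqrt (L * (1 - Y) * (L * (1 - Y))) = L * (1 - Y)"
      using Lpos Y1p by simp
    have "- (L * (cos t - Y)) / (L * (1 - Y)) = c"
    proof -
      have "cos t - Y = c * (cos t - 1) / (1 + c)" unfolding Y_def using cg
        by (simp add: field_simps)
      hence A: "cos t - Y = - c * (1 - Y)" unfolding Y1 by (simp add: field_simps)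
      show ?thesis unfolding A using Lpos Y1p by simp
    qed
    thus ?thesis unfolding dihedral_angle_def d01 d00 d11 sq c_def
      using nang by (simp add: arccos_cos)
  qed
  show ?thesis unfolding PY_exists_in_def using pyr ang by blast
qed

end
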